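(* For any positive integers $M,N,K,S$, any $\epsilon_0>0$ and any data matrices $\mathbf{Y}^{(1)},\dots,\mathbf{Y}^{(S)}\in\mathbb{R}^{M\times N}$, the solution sets $\Omega^*$ and $\dot\Omega$ are nonempty and compact.
   Context: $\mathcal{O}(M)$ is the group of real $M\times M$ orthogonal matrices. For $\Phi\in\mathcal{O}(M)$ set $\mathbb{E}_S([\Phi\mathbf{Y}]_{mn}^2)=\frac1S\sum_{s=1}^S[\Phi\mathbf{Y}^{(s)}]_{mn}^2$, and let $\mathbb{E}_S(|\Phi\mathbf{Y}|^{\circ2})$ be the $M\times N$ matrix with these entries. $F_K=\{(\mathbf{W},\mathbf{H})\in\mathbb{R}_+^{M\times K}\times\mathbb{R}_+^{K\times N}:\ \|\mathbf{w}_k\|_1=1\ \text{for all }k\}$, where $\mathbf{w}_k$ is the $k$-th column of $\mathbf{W}$. For entrywise nonnegative $M\times N$ matrices $\mathbf{A},\mathbf{B}$, $D_{\epsilon_0}(\mathbf{A}|\mathbf{B})=\sum_{m,n}\Big(\frac{A_{mn}+\epsilon_0}{B_{mn}+\epsilon_0}-\log\frac{A_{mn}+\epsilon_0}{B_{mn}+\epsilon_0}-1\Big)$. Define $C_S(\Phi,\mathbf{W},\mathbf{H})=\sum_{m,n}\Big(\frac{\mathbb{E}_S([\Phi\mathbf{Y}]_{mn}^2)+\epsilon_0}{[\mathbf{W}\mathbf{H}]_{mn}+\epsilon_0}+\log([\mathbf{W}\mathbf{H}]_{mn}+\epsilon_0)\Big)$, $L_S(\Phi)=MN+\sum_{m,n}\log(\mathbb{E}_S([\Phi\mathbf{Y}]_{mn}^2)+\epsilon_0)$,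 $I_S(\Phi,\mathbf{W},\mathbf{H})=D_{\epsilon_0}(\mathbb{E}_S(|\Phi\mathbf{Y}|^{\circ2})\,|\,\mathbf{W}\mathbf{H})$ (so that $C_S=L_S+I_S$). The TL-NMF solution set is $\Omega^*=\arg\min\{C_S(\Phi,\mathbf{W},\mathbf{H}):\Phi\in\mathcal{O}(M),(\mathbf{W},\mathbf{H})\in F_K\}$, and the JD+NMF solution set is $\dot\Omega=\{(\dot\Phi,\dot{\mathbf{W}},\dot{\mathbf{H}}):\dot\Phi\in\arg\min_{\Phi\in\mathcal{O}(M)}L_S(\Phi),\ (\dot{\mathbf{W}},\dot{\mathbf{H}})\in\arg\min_{(\mathbf{W},\mathbf{H})\in F_K}C_S(\dot\Phi,\mathbf{W},\mathbf{H})\}$. *)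

theory Defs
  imports "HOL-Analysis.Analysis"
begin

text \<open>Dimensions M, N, K are the cardinalities of the finite index types 'm, 'n, 'k.
  The data Y^(1),...,Y^(S) are given by Y :: nat => real^'n^'m, indexed by s in {1..S}.\<close>

definition ES :: "nat \<Rightarrow> (nat \<Rightarrow> real^'n^'m) \<Rightarrow> real^'m^'m \<Rightarrow> 'm \<Rightarrow> 'n \<Rightarrow> real" where
  "ES S Y \<Phi> m n = (1 / real S) * (\<Sum>s\<in>{1..S}. ((\<Phi> ** Y s) $ m $ n)^2)"

definition FK :: "((real^'k^'m) \<times> (real^'n^'k)) set" where
  "FK = {(W, H). (\<forall>i j. 0 \<le> W $ i $ j) \<and> (\<forall>i j. 0 \<le> H $ i $ j)
                 \<and> (\<forall>k. (\<Sum>m\<in>UNIV. \<bar>W $ m $ k\<bar>) = 1)}"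

definition CS :: "real \<Rightarrow> nat \<Rightarrow> (nat \<Rightarrow> real^'n^'m) \<Rightarrow> real^'m^'m \<Rightarrow> real^'k^'m \<Rightarrow> real^'n^'k \<Rightarrow> real" where
  "CS eps0 S Y \<Phi> W H = (\<Sum>m\<in>UNIV. \<Sum>n\<in>UNIV.
      (ES S Y \<Phi> m n + eps0) / ((W ** H) $ m $ n + eps0) + ln ((W ** H) $ m $ n + eps0))"

definition LS :: "real \<Rightarrow> nat \<Rightarrow> (nat \<Rightarrow> real^'n^'m) \<Rightarrow> real^'m^'m \<Rightarrow> real" where
  "LS eps0 S Y \<Phi> = real (CARD('m) * CARD('n)) + (\<Sum>m\<in>UNIV. \<Sum>n\<in>UNIV. ln (ES S Y \<Phi> m n + eps0))"

definition argmin_on :: "('a \<Rightarrow> real) \<Rightarrow> 'a set \<Rightarrow> 'a set" where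
  "argmin_on f A = {x \<in> A. \<forall>y\<in>A. f x \<le> f y}"

definition OM :: "(real^'m^'m) set" where
  "OM = {\<Phi>. orthogonal_matrix \<Phi>}"

definition Omega_star :: "real \<Rightarrow> nat \<Rightarrow> (nat \<Rightarrow> real^'n^'m)
     \<Rightarrow> ((real^'m^'m) \<times> (real^'k^'m) \<times> (real^'n^'k)) set" where
  "Omega_star eps0 S Y = argmin_on (\<lambda>(\<Phi>, W, H). CS eps0 S Y \<Phi> W H)
       {(\<Phi>, W, H). \<Phi> \<in> OM \<and> (W, H) \<in> FK}"

definition Omega_dot :: "real \<Rightarrow> nat \<Rightarrow> (nat \<Rightarrow> real^'n^'m)
     \<Rightarrow> ((real^'m^'m) \<times> (real^'k^'m) \<times> (real^'n^'k)) set" where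
  "Omega_dot eps0 S Y = {(\<Phi>, W, H). \<Phi> \<in> argmin_on (LS eps0 S Y) OM
       \<and> (W, H) \<in> argmin_on (\<lambda>(W', H'). CS eps0 S Y \<Phi> W' H') FK}"

end

theory Submission
  imports Defs
begin

lemma argmin_gen:
  fixes f :: "'a::heine_borel \<Rightarrow> real"
  assumes D: "closed D" and f: "continuous_on D f" and x0: "x0 \<in> D"
    and bd: "bounded {x\<in>D. f x \<le> f x0}"
  shows "argmin_on f D \<noteq> {} \<and> compact (argmin_on f D)"
proof -
  let ?K = "{x\<in>D. f x \<le> f x0}"
  have Keq: "?K = D \<inter> f -` {..f x0}" by auto
  have "closed (D \<inter> f -` {..f x0})" by (rule continuous_closed_preimage[OF f D closed_atMost])
  hence "closed ?K" by (simp only: Keq)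
  hence cK: "compact ?K" using bd by (simp add: compact_eq_bounded_closed)
  have "x0 \<in> ?K" using x0 by simp
  hence Kne: "?K \<noteq> {}" by (rule ex_in_conv[THEN iffD1, OF exI])
  have Kc: "continuous_on ?K f" by (rule continuous_on_subset[OF f]) (rule subsetI, simp)
  obtain x where x: "x \<in> ?K" "\<forall>y\<in>?K. f x \<le> f y"
    using continuous_attains_inf[OF cK Kne Kc] by (elim bexE) simp
  have eq: "argmin_on f D = D \<inter> f -` {..f x}"
  proof (rule set_eqI)
    fix y
    show "y \<in> argmin_on f D \<longleftrightarrow> y \<in> D \<inter> f -` {..f x}"
    proof
      assume "y \<in> argmin_on f D"
      hence "y \<in> D" "f y \<le> f x" using x(1) unfolding argmin_on_def by auto
      thus "y \<in> D \<inter> f -` {..f x}" by simp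
    next
      assume "y \<in> D \<inter> f -` {..f x}"
      hence y: "y \<in> D" "f y \<le> f x" by auto
      have "f y \<le> f z" if "z \<in> D" for z
      proof (cases "f z \<le> f x0")
        case True thus ?thesis using x(2) that y(2) by force
      next
        case False thus ?thesis using x(1) y(2) by auto
      qed
      thus "y \<in> argmin_on f D" using y(1) unfolding argmin_on_def by auto
    qed
  qed
  have "argmin_on f D \<noteq> {}" using eq x by auto
  moreover have "closed (argmin_on f D)" unfolding eq by (rule continuous_closed_preimage[OF f D closed_atMost])
  moreover have "argmin_on f D \<subseteq> ?K" using eq x by auto
  hence "bounded (argmin_on f D)" using bd bounded_subset by blast
  ultimately show ?thesis by (simp add: compact_eq_bounded_closed)
qed

lemma sum_aux: "\<forall>i j. \<bar>(x::real^'b^'a)$i$j\<bar> \<le> B \<Longrightarrow> (\<Sum>i\<in>UNIV. \<Sum>j\<in>UNIV. \<bar>x $ i $ j\<bar>) \<le> (\<Sum>i\<in>(UNIV::'a set). \<Sum>j\<in>(UNIV::'b set). B)"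
  by (intro sum_mono) blast

lemma bounded_entries: "bounded {x::real^'b^'a. \<forall>i j. \<bar>x$i$j\<bar> \<le> B}"
proof -
  have "norm x \<le> (\<Sum>i\<in>(UNIV::'a set). \<Sum>j\<in>(UNIV::'b set). B)" if "\<forall>i j. \<bar>x$i$j\<bar> \<le> B" for x :: "real^'b^'a"
  proof -
    have "norm x \<le> (\<Sum>i\<in>UNIV. norm (x$i))" by (simp add: norm_vec_def L2_set_le_sum)
    also have "\<dots> \<le> (\<Sum>i\<in>UNIV. \<Sum>j\<in>(UNIV::'b set). \<bar>x$i$j\<bar>)"
      by (intro sum_mono) (metis norm_le_l1_cart real_norm_def)
    also have "\<dots> \<le> (\<Sum>i\<in>(UNIV::'a set). \<Sum>j\<in>(UNIV::'b set). B)"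
      using that by (rule sum_aux)
    finally show ?thesis .
  qed
  thus ?thesis unfolding bounded_iff by blast
qed

lemma OM_entries: "\<Phi> \<in> OM \<Longrightarrow> \<bar>\<Phi>$i$j\<bar> \<le> 1"
proof -
  assume "\<Phi> \<in> OM"
  hence "norm (row i \<Phi>) = 1" unfolding OM_def using orthogonal_matrix_orthonormal_rows by blast
  moreover have "row i \<Phi> = \<Phi> $ i" by (simp add: row_def vec_eq_iff)
  ultimately show ?thesis using component_le_norm_cart[of "\<Phi>$i" j] by simp
qed

lemma OM_compact: "compact (OM :: (real^'m^'m) set)"
proof -
  have "OM = (UNIV::(real^'m^'m) set) \<inter> (\<lambda>\<Phi>. transpose \<Phi> ** \<Phi>) -` {mat 1}"
    unfolding OM_def orthogonal_matrix by auto
  moreover have "continuous_on UNIV (\<lambda>\<Phi>::real^'m^'m. transpose \<Phi> ** \<Phi>)"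
    unfolding matrix_matrix_mult_def transpose_def
    by (intro continuous_intros)
  moreover have "closed ((UNIV::(real^'m^'m) set) \<inter> (\<lambda>\<Phi>. transpose \<Phi> ** \<Phi>) -` {mat 1})"
    by (rule continuous_closed_preimage) (use calculation in auto)
  ultimately have "closed (OM :: (real^'m^'m) set)" by simp
  moreover have "bounded (OM :: (real^'m^'m) set)"
    by (rule bounded_subset[OF bounded_entries[of 1]]) (auto simp: OM_entries)
  ultimately show ?thesis using compact_eq_bounded_closed by blast
qed

lemma mm_nth: "(A ** B) $ i $ j = (\<Sum>k\<in>UNIV. A$i$k * B$k$j)"
  by (simp add: matrix_matrix_mult_def)

lemma CS_cont:
  assumes "eps0 > 0"
  shows "continuous_on {z. \<forall>m n. 0 \<le> (fst (snd z) ** snd (snd z))$m$n}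
     (\<lambda>z::(real^'m^'m) \<times> (real^'k^'m) \<times> (real^'n^'k). CS eps0 S Y (fst z) (fst (snd z)) (snd (snd z)))"
proof -
  let ?D = "{z::(real^'m^'m) \<times> (real^'k^'m) \<times> (real^'n^'k). \<forall>m n. 0 \<le> (fst (snd z) ** snd (snd z))$m$n}"
  have pos: "\<forall>z\<in>?D. (\<Sum>k\<in>UNIV. fst (snd z) $ m $ k * snd (snd z) $ k $ n) + eps0 \<noteq> 0" for m n
  proof
    fix z assume "z \<in> ?D"
    hence "0 \<le> (\<Sum>k\<in>UNIV. fst (snd z) $ m $ k * snd (snd z) $ k $ n)" by (simp add: mm_nth)
    thus "(\<Sum>k\<in>UNIV. fst (snd z) $ m $ k * snd (snd z) $ k $ n) + eps0 \<noteq> 0" using assms by linarith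
  qed
  have pos2: "\<forall>z\<in>?D. (\<Sum>k\<in>UNIV. fst (snd z) $ m $ k * snd (snd z) $ k $ n) + eps0 > 0" for m n
  proof
    fix z assume "z \<in> ?D"
    hence "0 \<le> (\<Sum>k\<in>UNIV. fst (snd z) $ m $ k * snd (snd z) $ k $ n)" by (simp add: mm_nth)
    thus "(\<Sum>k\<in>UNIV. fst (snd z) $ m $ k * snd (snd z) $ k $ n) + eps0 > 0" using assms by linarith
  qed
  show ?thesis
  unfolding CS_def ES_def mm_nth
  apply (intro continuous_intros)
  using assms by (auto simp: mm_nth) (metis add_nonneg_pos less_irrefl)+
qed

lemma ES_nonneg: "0 \<le> ES S Y \<Phi> m n"
  unfolding ES_def by (intro mult_nonneg_nonneg sum_nonneg) auto

lemma FK_nonneg: "(W, H) \<in> FK \<Longrightarrow> 0 \<le> (W ** H) $ m $ n"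
  unfolding FK_def mm_nth by (auto intro!: sum_nonneg mult_nonneg_nonneg)

lemma CS_lower:
  fixes \<Phi> :: "real^'m^'m" and W :: "real^'k^'m" and H :: "real^'n^'k"
  assumes e: "eps0 > 0" and nn: "\<forall>m n. 0 \<le> (W ** H)$m$n"
  shows "ln ((W**H)$i$j + eps0) + (real (CARD('m) * CARD('n)) - 1) * ln eps0 \<le> CS eps0 S Y \<Phi> W H"
proof -
  define t where "t m n = (ES S Y \<Phi> m n + eps0) / ((W ** H) $ m $ n + eps0) + ln ((W ** H) $ m $ n + eps0)" for m n
  define g where "g m n = t m n - ln eps0" for m n
  have tge: "ln ((W ** H) $ m $ n + eps0) \<le> t m n" for m n
    unfolding t_def using ES_nonneg[of S Y \<Phi> m n] nn e
    by (smt (verit) divide_nonneg_pos)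
  have lne: "ln eps0 \<le> ln ((W ** H) $ m $ n + eps0)" for m n
    using nn[rule_format, of m n] e by (subst ln_le_cancel_iff) auto
  have gnn: "0 \<le> g m n" for m n unfolding g_def using tge[of m n] lne[of m n] by linarith
  have CSeq: "CS eps0 S Y \<Phi> W H = (\<Sum>m\<in>UNIV. \<Sum>n\<in>UNIV. g m n) + real (CARD('m) * CARD('n)) * ln eps0"
    unfolding CS_def t_def[symmetric] g_def
    by (simp add: sum_subtractf sum.distrib)
  have "g i j \<le> (\<Sum>n\<in>UNIV. g i n)" by (rule member_le_sum) (auto simp: gnn)
  also have "\<dots> \<le> (\<Sum>m\<in>UNIV. \<Sum>n\<in>UNIV. g m n)" by (rule member_le_sum) (auto intro: sum_nonneg gnn)
  finally have "g i j \<le> (\<Sum>m\<in>UNIV. \<Sum>n\<in>UNIV. g m n)" .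
  thus ?thesis unfolding CSeq using tge[of i j] unfolding g_def by (simp add: algebra_simps)
qed

lemma FK_bound:
  fixes \<Phi> :: "real^'m^'m" and W :: "real^'k^'m" and H :: "real^'n^'k"
  assumes e: "eps0 > 0" and FK: "(W, H) \<in> FK" and C: "CS eps0 S Y \<Phi> W H \<le> C"
  shows "\<bar>W$i$k\<bar> \<le> 1" and "\<bar>H$k$j\<bar> \<le> real CARD('m) * exp (C - (real (CARD('m) * CARD('n)) - 1) * ln eps0)"
proof -
  have Wnn: "\<And>i k. 0 \<le> W$i$k" and Hnn: "\<And>k j. 0 \<le> H$k$j" and Ws: "\<And>k. (\<Sum>m\<in>UNIV. W$m$k) = 1"
    using FK unfolding FK_def by auto
  have "W$i$k \<le> (\<Sum>m\<in>UNIV. W$m$k)" by (rule member_le_sum) (auto simp: Wnn)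
  thus "\<bar>W$i$k\<bar> \<le> 1" using Ws Wnn[of i k] by simp
  define E where "E = exp (C - (real (CARD('m) * CARD('n)) - 1) * ln eps0)"
  have nn: "\<forall>m n. 0 \<le> (W ** H)$m$n" using FK_nonneg[OF FK] by blast
  have xb: "(W ** H)$m$j \<le> E" for m
  proof -
    have "ln ((W**H)$m$j + eps0) \<le> C - (real (CARD('m) * CARD('n)) - 1) * ln eps0"
      using CS_lower[OF e nn, of m j S Y \<Phi>] C by linarith
    hence "(W**H)$m$j + eps0 \<le> E" unfolding E_def
      using nn e by (metis add_nonneg_pos exp_le_cancel_iff exp_ln)
    thus ?thesis using e by linarith
  qed
  have "(\<Sum>m\<in>UNIV. (W ** H)$m$j) = (\<Sum>m\<in>UNIV. \<Sum>k\<in>UNIV. W$m$k * H$k$j)" by (simp add: mm_nth)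
  also have "\<dots> = (\<Sum>k\<in>UNIV. \<Sum>m\<in>UNIV. W$m$k * H$k$j)" by (rule sum.swap)
  also have "\<dots> = (\<Sum>k\<in>UNIV. H$k$j)" by (simp add: sum_distrib_right[symmetric] Ws)
  finally have seq: "(\<Sum>m\<in>UNIV. (W ** H)$m$j) = (\<Sum>k\<in>UNIV. H$k$j)" .
  have "H$k$j \<le> (\<Sum>k\<in>UNIV. H$k$j)" by (rule member_le_sum) (auto simp: Hnn)
  also have "\<dots> \<le> (\<Sum>m\<in>(UNIV::'m set). E)" unfolding seq[symmetric] by (rule sum_mono) (rule xb)
  finally show "\<bar>H$k$j\<bar> \<le> real CARD('m) * exp (C - (real (CARD('m) * CARD('n)) - 1) * ln eps0)"
    using Hnn[of k j] unfolding E_def by simp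
qed

lemma FK_sublevel_bounded:
  assumes e: "eps0 > 0"
  shows "bounded {p :: (real^'k^'m) \<times> (real^'n^'k). p \<in> FK \<and> (\<exists>\<Phi>::real^'m^'m. CS eps0 S Y \<Phi> (fst p) (snd p) \<le> C)}"
proof -
  define B where "B = real CARD('m) * exp (C - (real (CARD('m) * CARD('n)) - 1) * ln eps0)"
  have "{p :: (real^'k^'m) \<times> (real^'n^'k). p \<in> FK \<and> (\<exists>\<Phi>::real^'m^'m. CS eps0 S Y \<Phi> (fst p) (snd p) \<le> C)}
     \<subseteq> {x::real^'k^'m. \<forall>i j. \<bar>x$i$j\<bar> \<le> 1} \<times> {x::real^'n^'k. \<forall>i j. \<bar>x$i$j\<bar> \<le> B}"
  proof (rule subsetI)
    fix p :: "(real^'k^'m) \<times> (real^'n^'k)"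
    assume "p \<in> {p :: (real^'k^'m) \<times> (real^'n^'k). p \<in> FK \<and> (\<exists>\<Phi>::real^'m^'m. CS eps0 S Y \<Phi> (fst p) (snd p) \<le> C)}"
    then obtain \<Phi> :: "real^'m^'m" where p: "(fst p, snd p) \<in> FK" "CS eps0 S Y \<Phi> (fst p) (snd p) \<le> C" by auto
    have "\<forall>i j. \<bar>fst p$i$j\<bar> \<le> 1" using FK_bound(1)[OF e p] by blast
    moreover have "\<forall>i j. \<bar>snd p$i$j\<bar> \<le> B" unfolding B_def using FK_bound(2)[OF e p] by blast
    ultimately show "p \<in> {x::real^'k^'m. \<forall>i j. \<bar>x$i$j\<bar> \<le> 1} \<times> {x::real^'n^'k. \<forall>i j. \<bar>x$i$j\<bar> \<le> B}"
      by (simp add: mem_Times_iff)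
  qed
  moreover have "bounded ({x::real^'k^'m. \<forall>i j. \<bar>x$i$j\<bar> \<le> 1} \<times> {x::real^'n^'k. \<forall>i j. \<bar>x$i$j\<bar> \<le> B})"
    by (intro bounded_Times bounded_entries)
  ultimately show ?thesis by (rule bounded_subset[rotated])
qed

lemma FK_closed: "closed (FK :: ((real^'k^'m) \<times> (real^'n^'k)) set)"
proof -
  have "FK = {p :: ((real^'k^'m) \<times> (real^'n^'k)). (\<forall>i j. 0 \<le> fst p $ i $ j) \<and> (\<forall>i j. 0 \<le> snd p $ i $ j)
                 \<and> (\<forall>k. (\<Sum>m\<in>UNIV. \<bar>fst p $ m $ k\<bar>) = 1)}"
    unfolding FK_def by auto
  also have "closed \<dots>"
    by (intro closed_Collect_conj closed_Collect_all closed_Collect_le closed_Collect_eq continuous_intros)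
  finally show ?thesis .
qed

theorem theorem1:
  fixes eps0 :: real and S :: nat and Y :: "nat \<Rightarrow> real^'n^'m"
  assumes "S > 0" and "eps0 > 0"
  shows "(Omega_star eps0 S Y :: ((real^'m^'m) \<times> (real^'k^'m) \<times> (real^'n^'k)) set) \<noteq> {}
       \<and> compact (Omega_star eps0 S Y :: ((real^'m^'m) \<times> (real^'k^'m) \<times> (real^'n^'k)) set)
       \<and> (Omega_dot eps0 S Y :: ((real^'m^'m) \<times> (real^'k^'m) \<times> (real^'n^'k)) set) \<noteq> {}
       \<and> compact (Omega_dot eps0 S Y :: ((real^'m^'m) \<times> (real^'k^'m) \<times> (real^'n^'k)) set)"
proof -
  note e = assms(2)
  define F where "F = (\<lambda>z::(real^'m^'m) \<times> (real^'k^'m) \<times> (real^'n^'k). CS eps0 S Y (fst z) (fst (snd z)) (snd (snd z)))"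
  define Dom where "Dom = {z::(real^'m^'m) \<times> (real^'k^'m) \<times> (real^'n^'k). \<forall>m n. 0 \<le> (fst (snd z) ** snd (snd z))$m$n}"
  have Fc: "continuous_on Dom F" unfolding F_def Dom_def by (rule CS_cont[OF e])
  define W0 :: "real^'k^'m" where "W0 = (\<chi> i k. 1 / real CARD('m))"
  define H0 :: "real^'n^'k" where "H0 = 0"
  have FK0: "(W0, H0) \<in> FK" unfolding FK_def W0_def H0_def by simp
  have OMc: "compact (OM :: (real^'m^'m) set)" by (rule OM_compact)
  have id: "(mat 1 :: real^'m^'m) \<in> OM" unfolding OM_def by (simp add: orthogonal_matrix_id)
  have FKD: "(\<Phi>, p) \<in> Dom" if "p \<in> FK" for \<Phi> p
    using FK_nonneg[of "fst p" "snd p"] that unfolding Dom_def by simp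
  have clFK: "closed (FK :: ((real^'k^'m) \<times> (real^'n^'k)) set)" by (rule FK_closed)
  have star_eq: "(Omega_star eps0 S Y :: ((real^'m^'m) \<times> (real^'k^'m) \<times> (real^'n^'k)) set) = argmin_on F (OM \<times> FK)"
  proof -
    have "(\<lambda>(\<Phi>, W, H). CS eps0 S Y \<Phi> W H) = F" unfolding F_def by (auto simp: fun_eq_iff)
    moreover have "{(\<Phi>, W, H). \<Phi> \<in> OM \<and> (W, H) \<in> FK} = (OM \<times> FK :: ((real^'m^'m) \<times> (real^'k^'m) \<times> (real^'n^'k)) set)" by auto
    ultimately show ?thesis unfolding Omega_star_def by simp
  qed
  have star: "argmin_on F (OM \<times> FK) \<noteq> {} \<and> compact (argmin_on F (OM \<times> FK))"
  proof (rule argmin_gen)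
    show "closed (OM \<times> FK :: ((real^'m^'m) \<times> (real^'k^'m) \<times> (real^'n^'k)) set)"
      by (rule closed_Times[OF compact_imp_closed[OF OMc] clFK])
    show "continuous_on (OM \<times> FK :: ((real^'m^'m) \<times> (real^'k^'m) \<times> (real^'n^'k)) set) F" by (rule continuous_on_subset[OF Fc]) (auto intro: FKD)
    show "(mat 1 :: real^'m^'m, W0, H0) \<in> OM \<times> FK" using id FK0 by simp
    have "{x \<in> OM \<times> FK. F x \<le> F (mat 1, W0, H0)} \<subseteq>
       (OM :: (real^'m^'m) set) \<times> {p :: (real^'k^'m) \<times> (real^'n^'k). p \<in> FK \<and> (\<exists>\<Phi>::real^'m^'m. CS eps0 S Y \<Phi> (fst p) (snd p) \<le> F (mat 1, W0, H0))}"
      unfolding F_def by force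
    moreover have "bounded ((OM :: (real^'m^'m) set) \<times> {p :: (real^'k^'m) \<times> (real^'n^'k). p \<in> FK \<and> (\<exists>\<Phi>::real^'m^'m. CS eps0 S Y \<Phi> (fst p) (snd p) \<le> F (mat 1, W0, H0))})"
      by (intro bounded_Times compact_imp_bounded[OF OMc] FK_sublevel_bounded[OF e])
    ultimately show "bounded {x \<in> OM \<times> FK. F x \<le> F (mat 1, W0, H0)}" using bounded_subset by blast
  qed
  define P where "P = argmin_on (LS eps0 S Y) (OM :: (real^'m^'m) set)"
  have LSc: "continuous_on OM (LS eps0 S Y :: real^'m^'m \<Rightarrow> real)"
  proof -
    have "continuous_on UNIV (LS eps0 S Y :: real^'m^'m \<Rightarrow> real)"
      unfolding LS_def
      apply (intro continuous_intros)
      unfolding ES_def mm_nth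
      apply (intro continuous_intros)
      apply (intro ballI)
      subgoal for m n x using ES_nonneg[of S Y x m n] e unfolding ES_def mm_nth by linarith
      done
    thus ?thesis by (rule continuous_on_subset) auto
  qed
  have Pp: "P \<noteq> {} \<and> compact P" unfolding P_def
  proof (rule argmin_gen)
    show "closed (OM :: (real^'m^'m) set)" by (rule compact_imp_closed[OF OMc])
    show "continuous_on (OM :: (real^'m^'m) set) (LS eps0 S Y)" by (rule LSc)
    show "(mat 1 :: real^'m^'m) \<in> OM" by (rule id)
    show "bounded {x \<in> OM. LS eps0 S Y x \<le> LS eps0 S Y (mat 1)}"
      by (rule bounded_subset[OF compact_imp_bounded[OF OMc]]) auto
  qed
  have POM: "P \<subseteq> OM" unfolding P_def argmin_on_def by auto
  have dot_eq: "(Omega_dot eps0 S Y :: ((real^'m^'m) \<times> (real^'k^'m) \<times> (real^'n^'k)) set)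
      = {(\<Phi>, p). \<Phi> \<in> P \<and> p \<in> argmin_on (\<lambda>p. F (\<Phi>, p)) FK}"
  proof -
    have "(\<lambda>(W', H'). CS eps0 S Y \<Phi> W' H') = (\<lambda>p. F (\<Phi>, p))" for \<Phi> unfolding F_def by (auto simp: fun_eq_iff)
    thus ?thesis unfolding Omega_dot_def P_def by auto
  qed
  have sub: "argmin_on (\<lambda>p. F (\<Phi>, p)) FK \<noteq> {} \<and> compact (argmin_on (\<lambda>p. F (\<Phi>, p)) FK)" for \<Phi>
  proof (rule argmin_gen)
    show "closed (FK :: ((real^'k^'m) \<times> (real^'n^'k)) set)" by (rule clFK)
    show "continuous_on FK (\<lambda>p. F (\<Phi>, p))"
      by (rule continuous_on_compose2[OF Fc]) (auto intro!: continuous_intros FKD)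
    show "(W0, H0) \<in> FK" by (rule FK0)
    have "{x \<in> FK. F (\<Phi>, x) \<le> F (\<Phi>, W0, H0)} \<subseteq> {p :: (real^'k^'m) \<times> (real^'n^'k). p \<in> FK \<and> (\<exists>\<Psi>::real^'m^'m. CS eps0 S Y \<Psi> (fst p) (snd p) \<le> F (\<Phi>, W0, H0))}"
      unfolding F_def by force
    thus "bounded {x \<in> FK. F (\<Phi>, x) \<le> F (\<Phi>, W0, H0)}"
      by (rule bounded_subset[OF FK_sublevel_bounded[OF e], rotated])
  qed
  have dot_ne: "(Omega_dot eps0 S Y :: ((real^'m^'m) \<times> (real^'k^'m) \<times> (real^'n^'k)) set) \<noteq> {}"
  proof -
    obtain \<Phi> where "\<Phi> \<in> P" using Pp by blast
    moreover obtain p where "p \<in> argmin_on (\<lambda>p. F (\<Phi>, p)) FK" using sub[of \<Phi>] by blast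
    ultimately show ?thesis unfolding dot_eq by auto
  qed
  define f0 where "f0 = (\<lambda>\<Phi>::real^'m^'m. F (\<Phi>, W0, H0))"
  have f0c: "continuous_on OM f0" unfolding f0_def
    by (rule continuous_on_compose2[OF Fc]) (auto intro!: continuous_intros FKD FK0)
  have "bounded (f0 ` OM)" by (intro compact_imp_bounded compact_continuous_image f0c OMc)
  then obtain C where C: "\<forall>\<Phi>\<in>OM. f0 \<Phi> \<le> C" unfolding bounded_real by (meson abs_le_D1 imageI)
  have dot_bd: "bounded (Omega_dot eps0 S Y :: ((real^'m^'m) \<times> (real^'k^'m) \<times> (real^'n^'k)) set)"
  proof -
    have "(Omega_dot eps0 S Y :: ((real^'m^'m) \<times> (real^'k^'m) \<times> (real^'n^'k)) set) \<subseteq>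
       (OM :: (real^'m^'m) set) \<times> {p :: (real^'k^'m) \<times> (real^'n^'k). p \<in> FK \<and> (\<exists>\<Phi>::real^'m^'m. CS eps0 S Y \<Phi> (fst p) (snd p) \<le> C)}"
    proof
      fix z :: "(real^'m^'m) \<times> (real^'k^'m) \<times> (real^'n^'k)"
      assume "z \<in> Omega_dot eps0 S Y"
      then obtain \<Phi> p where z: "z = (\<Phi>, p)" "\<Phi> \<in> P" "p \<in> argmin_on (\<lambda>p. F (\<Phi>, p)) FK"
        unfolding dot_eq by auto
      have "\<Phi> \<in> OM" using z POM by auto
      moreover have "p \<in> FK" "F (\<Phi>, p) \<le> F (\<Phi>, W0, H0)" using z(3) FK0 unfolding argmin_on_def by auto
      moreover have "F (\<Phi>, W0, H0) \<le> C" using C \<open>\<Phi> \<in> OM\<close> unfolding f0_def by auto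
      ultimately have "F (\<Phi>, p) \<le> C" "\<Phi> \<in> OM" "p \<in> FK" by linarith+
      hence "CS eps0 S Y \<Phi> (fst p) (snd p) \<le> C" unfolding F_def by simp
      thus "z \<in> (OM :: (real^'m^'m) set) \<times> {p :: (real^'k^'m) \<times> (real^'n^'k). p \<in> FK \<and> (\<exists>\<Phi>::real^'m^'m. CS eps0 S Y \<Phi> (fst p) (snd p) \<le> C)}"
        using z(1) \<open>\<Phi> \<in> OM\<close> \<open>p \<in> FK\<close> by blast
    qed
    moreover have "bounded ((OM :: (real^'m^'m) set) \<times> {p :: (real^'k^'m) \<times> (real^'n^'k). p \<in> FK \<and> (\<exists>\<Phi>::real^'m^'m. CS eps0 S Y \<Phi> (fst p) (snd p) \<le> C)})"
      by (intro bounded_Times compact_imp_bounded[OF OMc] FK_sublevel_bounded[OF e])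
    ultimately show ?thesis using bounded_subset by blast
  qed
  define T where "T = (P \<times> FK :: ((real^'m^'m) \<times> (real^'k^'m) \<times> (real^'n^'k)) set)"
  have clT: "closed T" unfolding T_def using Pp by (intro closed_Times[OF compact_imp_closed clFK]) auto
  have TD: "T \<subseteq> Dom" unfolding T_def using FKD by auto
  have dot_eq2: "(Omega_dot eps0 S Y :: ((real^'m^'m) \<times> (real^'k^'m) \<times> (real^'n^'k)) set)
     = T \<inter> (\<Inter>y\<in>FK. T \<inter> (\<lambda>z. F z - F (fst z, y)) -` {..0})"
    unfolding dot_eq T_def argmin_on_def by auto
  have "closed (T \<inter> (\<lambda>z. F z - F (fst z, y)) -` {..0})" if y: "y \<in> FK" for y
  proof (rule continuous_closed_preimage[OF _ clT])
    show "continuous_on T (\<lambda>z. F z - F (fst z, y))"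
    proof (intro continuous_on_diff)
      show "continuous_on T F" by (rule continuous_on_subset[OF Fc TD])
      show "continuous_on T (\<lambda>z. F (fst z, y))"
      proof (rule continuous_on_compose2[OF Fc])
        show "continuous_on T (\<lambda>z. (fst z, y))" by (intro continuous_intros)
        show "(\<lambda>z. (fst z, y)) ` T \<subseteq> Dom" by (rule image_subsetI) (rule FKD[OF y])
      qed
    qed
  qed auto
  hence "closed (Omega_dot eps0 S Y :: ((real^'m^'m) \<times> (real^'k^'m) \<times> (real^'n^'k)) set)"
    unfolding dot_eq2 by (intro closed_Int clT closed_INT) auto
  hence "compact (Omega_dot eps0 S Y :: ((real^'m^'m) \<times> (real^'k^'m) \<times> (real^'n^'k)) set)"
    using dot_bd compact_eq_bounded_closed by blast
  thus ?thesis using star star_eq dot_ne by simp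
qed
end
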